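(* Let $\sigma=(a_1,\ldots,a_s)$ be an $r$-good partition of $r$ and let $H=H(n,r,q\mid\sigma)$. Let $A,B$ be disjoint sets with $A\cup B=\{1,\ldots,s\}$ such that, with $a=\sum_{j\in A}a_j$ and $b=\sum_{j\in B}a_j$, one has $\gcd(a,b)=\gcd(a,r)=\gcd(b,r)=1$, and let $L=\mathrm{lcm}(a,b)$. Then: (1) If either ($r\mid q$ and $n\ge s$) or ($r\mid n$ and $q\ge (L-1)(r-1)$), then $H$ has a perfect matching, i.e. $\nu(H)=\frac{qn}{r}$. (2) If $q\ge L(r-1)$ and $n\ge s$, then $H$ has a matching leaving at most $L(r-1)^2$ vertices unmatched; that is, $\nu(H)\ge \frac{qn-L(r-1)^2}{r}$. (3) If $q\ge L(r^2-1)$, $s\ge 3$ and $n\ge s+r$, then $H$ has a matching leaving at most $(r-1)^2$ vertices unmatched; that is, $\nu(H)\ge\frac{qn-(r-1)^2}{r}$.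
   Context: A $\sigma$-hypergraph $H=H(n,r,q\mid\sigma)$, for a partition $\sigma=(a_1,\ldots,a_s)$ of $r$ with $s=s(\sigma)$ parts, is the $r$-uniform hypergraph whose vertex set is the disjoint union of $n$ classes $V_1,\ldots,V_n$, each of size $q$; an $r$-subset $K$ of vertices is an edge iff the multiset of non-zero values $|K\cap V_i|$ ($1\le i\le n$) equals $\sigma$. The partition $\sigma$ is $r$-good if there is a subsequence $\pi$ of $(a_1,\ldots,a_s)$ (a selection of some of the parts, by index) such that $\sum_{a_j\in\pi}a_j$ is coprime to $r$. A matching is a set of pairwise vertex-disjoint edges; it is perfect if it covers every vertex; $\nu(H)$ is the maximum size of a matching. *)

theory Defs
  imports Complex_Main "HOL-Library.Multiset"
begin

definition is_partition :: "nat list \<Rightarrow> nat \<Rightarrow> bool" where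
  "is_partition \<sigma> r \<longleftrightarrow> (\<forall>a\<in>set \<sigma>. 0 < a) \<and> sum_list \<sigma> = r"

definition r_good :: "nat list \<Rightarrow> nat \<Rightarrow> bool" where
  "r_good \<sigma> r \<longleftrightarrow> (\<exists>J. J \<subseteq> {..<length \<sigma>} \<and> J \<noteq> {} \<and> coprime (\<Sum>j\<in>J. \<sigma> ! j) r)"

text \<open>Vertices: (i, x) with i < n (class index) and x < q; class V_i = {(i,x). x < q}.\<close>
definition sh_vertices :: "nat \<Rightarrow> nat \<Rightarrow> (nat \<times> nat) set" where
  "sh_vertices n q = {..<n} \<times> {..<q}"

definition sh_class :: "nat \<Rightarrow> nat \<Rightarrow> (nat \<times> nat) set" where
  "sh_class q i = {i} \<times> {..<q}"

definition sh_edges :: "nat \<Rightarrow> nat \<Rightarrow> nat \<Rightarrow> nat list \<Rightarrow> (nat \<times> nat) set set" where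
  "sh_edges n r q \<sigma> = {K. K \<subseteq> sh_vertices n q \<and> card K = r \<and>
      image_mset (\<lambda>i. card (K \<inter> sh_class q i))
        (filter_mset (\<lambda>i. card (K \<inter> sh_class q i) \<noteq> 0) (mset_set {..<n})) = mset \<sigma>}"

definition is_matching :: "'v set set \<Rightarrow> 'v set set \<Rightarrow> bool" where
  "is_matching E M \<longleftrightarrow> M \<subseteq> E \<and> (\<forall>e\<in>M. \<forall>f\<in>M. e \<noteq> f \<longrightarrow> e \<inter> f = {})"

definition is_perfect_matching :: "'v set \<Rightarrow> 'v set set \<Rightarrow> 'v set set \<Rightarrow> bool" where
  "is_perfect_matching V E M \<longleftrightarrow> is_matching E M \<and> \<Union>M = V"

definition matching_number :: "'v set set \<Rightarrow> nat" where
  "matching_number E = Max {card M | M. is_matching E M \<and> finite M}"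

end

theory Submission
  imports Defs "HOL-Number_Theory.Number_Theory"
begin

definition valid :: "nat \<Rightarrow> nat list \<Rightarrow> (nat \<Rightarrow> nat) \<Rightarrow> bool" where
  "valid n \<sigma> c \<longleftrightarrow> image_mset c (filter_mset (\<lambda>i. c i \<noteq> 0) (mset_set {..<n})) = mset \<sigma>"

definition tot :: "(nat \<Rightarrow> nat) list \<Rightarrow> nat \<Rightarrow> nat" where
  "tot cs i = sum_list (map (\<lambda>c. c i) cs)"

lemma valid_sum:
  assumes "valid n \<sigma> c"
  shows "(\<Sum>i<n. c i) = sum_list \<sigma>"
proof -
  have "sum_list \<sigma> = sum_mset (mset \<sigma>)" by (simp add: sum_mset_sum_list)
  also have "\<dots> = sum_mset (image_mset c (mset_set {i\<in>{..<n}. c i \<noteq> 0}))"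
    using assms unfolding valid_def by (simp add: filter_mset_mset_set)
  also have "\<dots> = sum c {i\<in>{..<n}. c i \<noteq> 0}" by (simp add: sum_unfold_sum_mset)
  also have "\<dots> = (\<Sum>i<n. c i)" by (rule sum.mono_neutral_left) auto
  finally show ?thesis by simp
qed

lemma tot_nth: "tot cs i = (\<Sum>k<length cs. (cs!k) i)"
  unfolding tot_def by (simp add: sum_list_sum_nth atLeast0LessThan)

lemma tot_append[simp]: "tot (cs @ ds) i = tot cs i + tot ds i"
  unfolding tot_def by simp

lemma tot_Nil[simp]: "tot [] i = 0"
  unfolding tot_def by simp

lemma tot_concat_replicate[simp]: "tot (concat (replicate k cs)) i = k * tot cs i"
  by (induction k) auto

lemma tot_sum:
  assumes "\<forall>c\<in>set cs. valid n \<sigma> c"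
  shows "(\<Sum>i<n. tot cs i) = sum_list \<sigma> * length cs"
  using assms
proof (induction cs)
  case Nil then show ?case by simp
next
  case (Cons c cs)
  have "(\<Sum>i<n. tot (c # cs) i) = (\<Sum>i<n. c i) + (\<Sum>i<n. tot cs i)"
    by (simp add: tot_def sum.distrib)
  then show ?case using Cons valid_sum[of n \<sigma> c] by simp
qed

lemma matching_card:
  assumes "is_matching (sh_edges n r q \<sigma>) M" "finite M"
  shows "card (\<Union>M) = r * card M \<and> \<Union>M \<subseteq> sh_vertices n q"
proof -
  have sub: "\<And>K. K \<in> M \<Longrightarrow> K \<subseteq> sh_vertices n q \<and> card K = r"
    using assms unfolding is_matching_def sh_edges_def by auto
  have fin: "finite (sh_vertices n q)" unfolding sh_vertices_def by simp
  have "card (\<Union>M) = sum card M"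
    apply (rule card_Union_disjoint)
    using assms(1) unfolding is_matching_def pairwise_def disjnt_def apply blast
    using sub fin finite_subset by blast
  also have "\<dots> = r * card M" using sub by simp
  finally show ?thesis using sub by blast
qed

lemma realize:
  assumes val: "\<forall>c\<in>set cs. valid n \<sigma> c" and le: "\<forall>i<n. tot cs i \<le> q"
    and r: "sum_list \<sigma> = r" "0 < r"
  shows "\<exists>M. is_matching (sh_edges n r q \<sigma>) M \<and> finite M \<and> card M = length cs"
proof -
  define off where "off k i = (\<Sum>l<k. (cs!l) i)" for k i
  define K where "K k = Sigma {..<n} (\<lambda>i. {off k i..<off (Suc k) i})" for k
  have offS: "off (Suc k) i = off k i + (cs!k) i" for k i unfolding off_def by simp
  have offmono: "k \<le> k' \<Longrightarrow> off k i \<le> off k' i" for k k' i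
    unfolding off_def by (rule sum_mono2) auto
  have offq: "k < length cs \<Longrightarrow> i < n \<Longrightarrow> off (Suc k) i \<le> q" for k i
  proof -
    assume "k < length cs" "i < n"
    then have "off (Suc k) i \<le> off (length cs) i" by (intro offmono) simp
    also have "\<dots> = tot cs i" unfolding off_def tot_nth by simp
    finally show ?thesis using le \<open>i < n\<close> le_trans by blast
  qed
  have Kcl: "K k \<inter> sh_class q i = {i} \<times> {off k i..<off (Suc k) i}"
    if "k < length cs" "i < n" for k i
    using that offq[OF that] unfolding K_def sh_class_def by auto
  have cardcl: "card (K k \<inter> sh_class q i) = (cs!k) i" if "k < length cs" "i < n" for k i
    using Kcl[OF that] offS by simp
  have KE: "K k \<in> sh_edges n r q \<sigma>" if k: "k < length cs" for k
  proof -
    have vk: "valid n \<sigma> (cs!k)" using val k by simp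
    have "K k \<subseteq> sh_vertices n q"
      using offq[OF k] unfolding K_def sh_vertices_def by fastforce
    moreover have "card (K k) = r"
    proof -
      have "card (K k) = (\<Sum>i<n. card {off k i..<off (Suc k) i})"
        unfolding K_def by (rule card_SigmaI) auto
      also have "\<dots> = (\<Sum>i<n. (cs!k) i)" using offS by simp
      also have "\<dots> = r" using valid_sum[OF vk] r by simp
      finally show ?thesis .
    qed
    moreover have "image_mset (\<lambda>i. card (K k \<inter> sh_class q i))
        (filter_mset (\<lambda>i. card (K k \<inter> sh_class q i) \<noteq> 0) (mset_set {..<n})) = mset \<sigma>"
    proof -
      have "filter_mset (\<lambda>i. card (K k \<inter> sh_class q i) \<noteq> 0) (mset_set {..<n})
          = filter_mset (\<lambda>i. (cs!k) i \<noteq> 0) (mset_set {..<n})"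
        by (rule filter_mset_cong) (auto simp: cardcl[OF k])
      moreover have "image_mset (\<lambda>i. card (K k \<inter> sh_class q i)) (filter_mset (\<lambda>i. (cs!k) i \<noteq> 0) (mset_set {..<n}))
          = image_mset (cs!k) (filter_mset (\<lambda>i. (cs!k) i \<noteq> 0) (mset_set {..<n}))"
        by (rule image_mset_cong) (auto simp: cardcl[OF k])
      ultimately show ?thesis using vk unfolding valid_def by simp
    qed
    ultimately show ?thesis unfolding sh_edges_def by blast
  qed
  have disj: "K k \<inter> K k' = {}" if "k < k'" for k k'
  proof -
    have "off (Suc k) i \<le> off k' i" for i using that by (intro offmono) simp
    then show ?thesis unfolding K_def
      by (auto simp: disjoint_iff) (meson le_trans not_le)
  qed
  have ne: "K k \<noteq> {}" if "k < length cs" for k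
    using KE[OF that] r unfolding sh_edges_def by auto
  have inj: "inj_on K {..<length cs}"
  proof (rule inj_onI)
    fix k k' assume "k \<in> {..<length cs}" "k' \<in> {..<length cs}" "K k = K k'"
    then show "k = k'" using disj[of k k'] disj[of k' k] ne
      by (metis Int_absorb lessThan_iff linorder_neqE_nat)
  qed
  define M where "M = K ` {..<length cs}"
  have "is_matching (sh_edges n r q \<sigma>) M"
    unfolding is_matching_def M_def
  proof (intro conjI)
    show "K ` {..<length cs} \<subseteq> sh_edges n r q \<sigma>" using KE by auto
    show "\<forall>e\<in>K ` {..<length cs}. \<forall>f\<in>K ` {..<length cs}. e \<noteq> f \<longrightarrow> e \<inter> f = {}"
      using disj by (metis Int_commute imageE linorder_neqE_nat)
  qed
  moreover have "card M = length cs" unfolding M_def using card_image[OF inj] by simp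
  ultimately show ?thesis unfolding M_def by blast
qed

definition rk :: "nat set \<Rightarrow> nat \<Rightarrow> nat" where
  "rk J j = card {k\<in>J. k < j}"

definition cnt :: "nat list \<Rightarrow> (nat \<Rightarrow> nat) \<Rightarrow> nat \<Rightarrow> nat" where
  "cnt \<sigma> p i = (\<Sum>j<length \<sigma>. if p j = i then \<sigma>!j else 0)"

definition gpos :: "nat set \<Rightarrow> nat set \<Rightarrow> nat list \<Rightarrow> nat \<Rightarrow> nat \<Rightarrow> nat \<Rightarrow> nat \<Rightarrow> nat" where
  "gpos J J' zs N1 N2 e j = (if j \<in> J then zs ! ((rk J j + e) mod N1)
       else zs ! (N1 + (rk J' j + e) mod N2))"

definition glist :: "nat list \<Rightarrow> nat set \<Rightarrow> nat set \<Rightarrow> nat list \<Rightarrow> nat \<Rightarrow> nat \<Rightarrow> nat \<Rightarrow> (nat \<Rightarrow> nat) list" where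
  "glist \<sigma> J J' zs N1 N2 m = map (\<lambda>e. cnt \<sigma> (gpos J J' zs N1 N2 e)) [0..<m]"

lemma rk_less: "finite J \<Longrightarrow> j \<in> J \<Longrightarrow> rk J j < card J"
  unfolding rk_def by (rule psubset_card_mono) auto

lemma rk_inj: assumes "finite J" "j \<in> J" "j' \<in> J" "rk J j = rk J j'" shows "j = j'"
proof (rule ccontr)
  assume "j \<noteq> j'"
  then have "j < j' \<or> j' < j" by arith
  then show False
  proof
    assume "j < j'"
    then have "{k\<in>J. k < j} \<subset> {k\<in>J. k < j'}" using assms by auto
    then have "rk J j < rk J j'" unfolding rk_def using assms(1)
      by (intro psubset_card_mono) auto
    then show False using assms by simp
  next
    assume "j' < j"
    then have "{k\<in>J. k < j'} \<subset> {k\<in>J. k < j}" using assms by auto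
    then have "rk J j' < rk J j" unfolding rk_def using assms(1)
      by (intro psubset_card_mono) auto
    then show False using assms by simp
  qed
qed

lemma cnt_valid:
  assumes inj: "inj_on p {..<length \<sigma>}" and rng: "p ` {..<length \<sigma>} \<subseteq> {..<n}"
    and pos: "\<forall>x\<in>set \<sigma>. 0 < x"
  shows "valid n \<sigma> (cnt \<sigma> p)"
proof -
  let ?s = "length \<sigma>"
  have cp: "cnt \<sigma> p (p j) = \<sigma>!j" if "j < ?s" for j
  proof -
    have "cnt \<sigma> p (p j) = (\<Sum>j'<?s. if j' = j then \<sigma>!j' else 0)"
      unfolding cnt_def
      by (rule sum.cong) (use inj that in \<open>auto dest: inj_onD\<close>)
    also have "\<dots> = \<sigma>!j" using that by simp
    finally show ?thesis .
  qed
  have c0: "cnt \<sigma> p i = 0" if "i \<notin> p ` {..<?s}" for i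
    unfolding cnt_def using that by (auto intro!: sum.neutral)
  have filt: "{i\<in>{..<n}. cnt \<sigma> p i \<noteq> 0} = p ` {..<?s}"
  proof (intro subsetI equalityI)
    fix i assume "i \<in> {i\<in>{..<n}. cnt \<sigma> p i \<noteq> 0}"
    then show "i \<in> p ` {..<?s}" using c0 by (cases "i \<in> p ` {..<?s}") simp_all
  next
    fix i assume "i \<in> p ` {..<?s}"
    then obtain j where j: "j < ?s" "i = p j" by blast
    have "0 < \<sigma>!j" using pos j(1) by simp
    then show "i \<in> {i\<in>{..<n}. cnt \<sigma> p i \<noteq> 0}" using rng j cp[OF j(1)] by auto
  qed
  have "image_mset (cnt \<sigma> p) (filter_mset (\<lambda>i. cnt \<sigma> p i \<noteq> 0) (mset_set {..<n}))
      = image_mset (cnt \<sigma> p) (mset_set (p ` {..<?s}))"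
    using filter_mset_mset_set[of "{..<n}" "\<lambda>i. cnt \<sigma> p i \<noteq> 0"] filt by simp
  also have "\<dots> = image_mset (cnt \<sigma> p) (image_mset p (mset_set {..<?s}))"
    using image_mset_mset_set[OF inj] by simp
  also have "\<dots> = image_mset (\<lambda>j. cnt \<sigma> p (p j)) (mset_set {..<?s})"
    by (simp add: image_mset.compositionality comp_def)
  also have "\<dots> = image_mset (nth \<sigma>) (mset_set {..<?s})"
    by (rule image_mset_cong) (simp add: cp)
  also have "\<dots> = mset \<sigma>"
  proof -
    have "image_mset (nth \<sigma>) (mset_set {..<?s}) = mset (map (nth \<sigma>) [0..<?s])"
      by (simp only: mset_set_upto_eq_mset_upto mset_map)
    then show ?thesis by (simp only: map_nth)
  qed
  finally show ?thesis unfolding valid_def .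
qed

lemma rot_bij: fixes N c :: nat shows "0 < N \<Longrightarrow> bij_betw (\<lambda>e. (c + e) mod N) {..<N} {..<N}"
proof -
  assume N: "0 < N"
  have inj: "inj_on (\<lambda>e. (c + e) mod N) {..<N}"
  proof (rule inj_onI)
    fix x y assume "x \<in> {..<N}" "y \<in> {..<N}" "(c + x) mod N = (c + y) mod N"
    then have "[c + x = c + y] (mod N)" by (simp add: cong_def)
    then have "[x = y] (mod N)" by (simp add: cong_add_lcancel_nat)
    then show "x = y" using \<open>x \<in> {..<N}\<close> \<open>y \<in> {..<N}\<close> cong_less_imp_eq_nat by auto
  qed
  have "(\<lambda>e. (c + e) mod N) ` {..<N} \<subseteq> {..<N}" using N by auto
  then have "(\<lambda>e. (c + e) mod N) ` {..<N} = {..<N}" using inj by (simp add: endo_inj_surj)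
  then show ?thesis using inj by (simp add: bij_betw_def)
qed

lemma rot_sum: fixes N c :: nat shows "0 < N \<Longrightarrow> (\<Sum>e<N. f ((c + e) mod N)) = (\<Sum>x<N. f x)"
  using sum.reindex_bij_betw[OF rot_bij[of N c], of f] by simp

lemma per_sum: fixes N c k :: nat assumes "0 < N" shows "(\<Sum>e<N*k. f ((c + e) mod N)) = k * (\<Sum>x<N. f x)"
proof (induction k)
  case 0 then show ?case by simp
next
  case (Suc k)
  have "(\<Sum>e<N * Suc k. f ((c + e) mod N)) = (\<Sum>e<N*k. f ((c + e) mod N)) + (\<Sum>e\<in>{N*k..<N*k+N}. f ((c + e) mod N))"
    using sum.atLeastLessThan_concat[of 0 "N*k" "N*k+N" "\<lambda>e. f ((c + e) mod N)"]
    by (simp add: atLeast0LessThan add.commute)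
  also have "(\<Sum>e\<in>{N*k..<N*k+N}. f ((c + e) mod N)) = (\<Sum>e\<in>{0..<N}. f ((c + (e + N*k)) mod N))"
    using sum.shift_bounds_nat_ivl[of "\<lambda>e. f ((c + e) mod N)" 0 "N*k" N] by (simp add: add.commute)
  also have "\<dots> = (\<Sum>e<N. f ((c + e) mod N))"
    by (simp add: atLeast0LessThan add.assoc[symmetric])
  also have "\<dots> = (\<Sum>x<N. f x)" using rot_sum[OF assms] .
  finally show ?case using Suc by simp
qed

lemma count_sum: fixes N m u c :: nat assumes "0 < N" "N dvd m" "u < N"
  shows "(\<Sum>e<m. if (c + e) mod N = u then x else 0) = (m div N) * (x::nat)"
proof -
  obtain k where m: "m = N * k" using assms(2) by blast
  have "(\<Sum>e<m. if (c + e) mod N = u then x else 0) = k * (\<Sum>y<N. if y = u then x else 0)"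
    unfolding m by (rule per_sum[OF assms(1), where f = "\<lambda>y. if y = u then x else 0"])
  also have "\<dots> = k * x" using assms(3) by simp
  finally show ?thesis using m assms(1) by simp
qed

locale grp =
  fixes \<sigma> :: "nat list" and J J' :: "nat set" and zs :: "nat list" and N1 N2 :: nat
  assumes dist: "distinct zs" and len: "length zs = N1 + N2"
    and JJ: "J \<inter> J' = {}" "J \<union> J' = {..<length \<sigma>}"
    and cJ: "card J \<le> N1" and cJ': "card J' \<le> N2" and N1: "0 < N1"
begin

lemma finJ: "finite J" and finJ': "finite J'"
  using JJ(2) by (metis finite_Un finite_lessThan)+

lemma N2pos: "j \<in> J' \<Longrightarrow> 0 < N2"
  using cJ' finJ' by (metis card_gt_0_iff empty_iff gr0I le_zero_eq)

lemma idxJ: "j \<in> J \<Longrightarrow> (rk J j + e) mod N1 < length zs"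
  using N1 len by (simp add: trans_less_add1)

lemma idxJ': "j \<in> J' \<Longrightarrow> N1 + (rk J' j + e) mod N2 < length zs"
  using N2pos len by simp

lemma nth_eq: "x < length zs \<Longrightarrow> y < length zs \<Longrightarrow> zs!x = zs!y \<longleftrightarrow> x = y"
  using dist by (simp add: nth_eq_iff_index_eq)

lemma gposJ: "j \<in> J \<Longrightarrow> gpos J J' zs N1 N2 e j = zs ! ((rk J j + e) mod N1)"
  unfolding gpos_def by simp

lemma gposJ': "j \<in> J' \<Longrightarrow> gpos J J' zs N1 N2 e j = zs ! (N1 + (rk J' j + e) mod N2)"
  unfolding gpos_def using JJ(1) by auto

lemma rk_mod_inj:
  assumes "finite K" "card K \<le> N" "j \<in> K" "j' \<in> K" "(rk K j + e) mod N = (rk K j' + e) mod N"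
  shows "j = j'"
proof -
  have "[rk K j + e = rk K j' + e] (mod N)" using assms by (simp add: cong_def)
  then have "[rk K j = rk K j'] (mod N)" by (simp add: cong_add_rcancel_nat)
  moreover have "rk K j < N" "rk K j' < N" using rk_less[OF assms(1)] assms by (meson less_le_trans)+
  ultimately have "rk K j = rk K j'" using cong_less_imp_eq_nat by blast
  then show ?thesis using rk_inj assms by blast
qed

lemma gpos_inj: "inj_on (gpos J J' zs N1 N2 e) {..<length \<sigma>}"
proof (rule inj_onI)
  fix j j' assume j: "j \<in> {..<length \<sigma>}" and j': "j' \<in> {..<length \<sigma>}"
    and eq: "gpos J J' zs N1 N2 e j = gpos J J' zs N1 N2 e j'"
  have "j \<in> J \<or> j \<in> J'" "j' \<in> J \<or> j' \<in> J'" using j j' JJ(2) by auto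
  then show "j = j'"
  proof (elim disjE)
    assume a: "j \<in> J" "j' \<in> J"
    then show ?thesis using eq gposJ nth_eq idxJ rk_mod_inj[OF finJ cJ] by metis
  next
    assume a: "j \<in> J" "j' \<in> J'"
    then have "(rk J j + e) mod N1 = N1 + (rk J' j' + e) mod N2"
      using eq gposJ gposJ' nth_eq idxJ idxJ' by metis
    moreover have "(rk J j + e) mod N1 < N1" using N1 by simp
    ultimately show ?thesis by simp
  next
    assume a: "j \<in> J'" "j' \<in> J"
    then have "(rk J j' + e) mod N1 = N1 + (rk J' j + e) mod N2"
      using eq gposJ gposJ' nth_eq idxJ idxJ' by metis
    moreover have "(rk J j' + e) mod N1 < N1" using N1 by simp
    ultimately show ?thesis by simp
  next
    assume a: "j \<in> J'" "j' \<in> J'"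
    then have "(rk J' j + e) mod N2 = (rk J' j' + e) mod N2"
      using eq gposJ' nth_eq idxJ' by (metis add_left_cancel)
    then show ?thesis using a rk_mod_inj[OF finJ' cJ'] by blast
  qed
qed

lemma gpos_rng: "j < length \<sigma> \<Longrightarrow> gpos J J' zs N1 N2 e j \<in> set zs"
proof -
  assume "j < length \<sigma>"
  then have "j \<in> J \<or> j \<in> J'" using JJ(2) by auto
  then show ?thesis using gposJ gposJ' idxJ idxJ' nth_mem by metis
qed

lemma glist_valid:
  assumes "set zs \<subseteq> {..<n}" "\<forall>x\<in>set \<sigma>. 0 < x"
  shows "\<forall>c\<in>set (glist \<sigma> J J' zs N1 N2 m). valid n \<sigma> c"
  unfolding glist_def using assms gpos_inj gpos_rng
  by (auto intro!: cnt_valid) (meson lessThan_iff subsetD)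

lemma tot_glist: "tot (glist \<sigma> J J' zs N1 N2 m) i =
    (\<Sum>j<length \<sigma>. \<Sum>e<m. if gpos J J' zs N1 N2 e j = i then \<sigma>!j else 0)"
proof -
  have "tot (glist \<sigma> J J' zs N1 N2 m) i = (\<Sum>e<m. cnt \<sigma> (gpos J J' zs N1 N2 e) i)"
    unfolding tot_def glist_def by (simp add: interv_sum_list_conv_sum_set_nat atLeast0LessThan comp_def)
  also have "\<dots> = (\<Sum>j<length \<sigma>. \<Sum>e<m. if gpos J J' zs N1 N2 e j = i then \<sigma>!j else 0)"
    unfolding cnt_def by (rule sum.swap)
  finally show ?thesis .
qed

lemma split_sum: "(\<Sum>j<length \<sigma>. f j) = (\<Sum>j\<in>J. f j) + (\<Sum>j\<in>J'. f j)"
  using sum.union_disjoint[OF finJ finJ' JJ(1), of f] JJ(2) by simp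

lemma tot1:
  assumes "u < N1" "N1 dvd m"
  shows "tot (glist \<sigma> J J' zs N1 N2 m) (zs!u) = (m div N1) * (\<Sum>j\<in>J. \<sigma>!j)"
proof -
  have uz: "u < length zs" using assms len by simp
  have A: "(\<Sum>e<m. if gpos J J' zs N1 N2 e j = zs!u then \<sigma>!j else 0) = (m div N1) * \<sigma>!j" if "j \<in> J" for j
  proof -
    have "(\<Sum>e<m. if gpos J J' zs N1 N2 e j = zs!u then \<sigma>!j else 0) =
        (\<Sum>e<m. if (rk J j + e) mod N1 = u then \<sigma>!j else 0)"
      using that gposJ nth_eq[OF idxJ[OF that] uz] by simp
    also have "\<dots> = (m div N1) * \<sigma>!j" using count_sum[OF N1 assms(2) assms(1)] by simp
    finally show ?thesis .
  qed
  have B: "(\<Sum>e<m. if gpos J J' zs N1 N2 e j = zs!u then \<sigma>!j else 0) = 0" if "j \<in> J'" for j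
  proof -
    have "gpos J J' zs N1 N2 e j \<noteq> zs!u" for e
      using that gposJ' nth_eq[OF idxJ'[OF that] uz] assms(1) by simp
    then show ?thesis by simp
  qed
  show ?thesis unfolding tot_glist split_sum using A B by (simp add: sum_distrib_left)
qed

lemma tot2:
  assumes "u < N2" "J' = {} \<or> N2 dvd m"
  shows "tot (glist \<sigma> J J' zs N1 N2 m) (zs!(N1+u)) = (m div N2) * (\<Sum>j\<in>J'. \<sigma>!j)"
proof -
  have uz: "N1 + u < length zs" using assms len by simp
  have A: "(\<Sum>e<m. if gpos J J' zs N1 N2 e j = zs!(N1+u) then \<sigma>!j else 0) = (m div N2) * \<sigma>!j" if "j \<in> J'" for j
  proof -
    have "(\<Sum>e<m. if gpos J J' zs N1 N2 e j = zs!(N1+u) then \<sigma>!j else 0) =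
        (\<Sum>e<m. if (rk J' j + e) mod N2 = u then \<sigma>!j else 0)"
      using that gposJ' nth_eq[OF idxJ'[OF that] uz] by simp
    also have "\<dots> = (m div N2) * \<sigma>!j" using count_sum[OF N2pos[OF that] _ assms(1)] assms(2) that by auto
    finally show ?thesis .
  qed
  have B: "(\<Sum>e<m. if gpos J J' zs N1 N2 e j = zs!(N1+u) then \<sigma>!j else 0) = 0" if "j \<in> J" for j
  proof -
    have "gpos J J' zs N1 N2 e j \<noteq> zs!(N1+u)" for e
      using that gposJ nth_eq[OF idxJ[OF that] uz] N1 by (metis mod_less_divisor not_add_less1)
    then show ?thesis by simp
  qed
  show ?thesis unfolding tot_glist split_sum using A B by (simp add: sum_distrib_left)
qed

lemma tot3:
  assumes "i \<notin> set zs"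
  shows "tot (glist \<sigma> J J' zs N1 N2 m) i = 0"
  unfolding tot_glist using assms gpos_rng by (auto intro!: sum.neutral) 

end

definition rot :: "nat list \<Rightarrow> nat list \<Rightarrow> (nat \<Rightarrow> nat) list" where
  "rot \<sigma> zs = glist \<sigma> {..<length \<sigma>} {} zs (length zs) 0 (length zs)"

definition blk :: "nat list \<Rightarrow> nat set \<Rightarrow> nat set \<Rightarrow> nat \<Rightarrow> nat \<Rightarrow> nat list \<Rightarrow> nat \<Rightarrow> (nat \<Rightarrow> nat) list" where
  "blk \<sigma> A B a b zs k = glist \<sigma> A B zs (a*k) (b*k) (k*a*b)"

lemma rot_grp: assumes "distinct zs" "length \<sigma> \<le> length zs" "\<sigma> \<noteq> []"
  shows "grp \<sigma> {..<length \<sigma>} {} zs (length zs) 0"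
  using assms by unfold_locales auto

lemma rot_tot: assumes "distinct zs" "length \<sigma> \<le> length zs" "\<sigma> \<noteq> []"
  shows "tot (rot \<sigma> zs) i = (if i \<in> set zs then sum_list \<sigma> else 0)"
proof -
  interpret grp \<sigma> "{..<length \<sigma>}" "{}" zs "length zs" 0 by (rule rot_grp[OF assms])
  show ?thesis
  proof (cases "i \<in> set zs")
    case True
    then obtain u where u: "u < length zs" "i = zs!u" by (metis in_set_conv_nth)
    have "tot (rot \<sigma> zs) i = (length zs div length zs) * (\<Sum>j<length \<sigma>. \<sigma>!j)"
      unfolding rot_def u(2) by (rule tot1[OF u(1)]) simp
    also have "\<dots> = sum_list \<sigma>" using N1 by (simp add: sum_list_sum_nth atLeast0LessThan)
    finally show ?thesis using True by simp
  next
    case False then show ?thesis unfolding rot_def using tot3 by simp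
  qed
qed

lemma rot_valid: assumes "distinct zs" "length \<sigma> \<le> length zs" "\<sigma> \<noteq> []"
    "set zs \<subseteq> {..<n}" "\<forall>x\<in>set \<sigma>. 0 < x"
  shows "\<forall>c\<in>set (rot \<sigma> zs). valid n \<sigma> c"
proof -
  interpret grp \<sigma> "{..<length \<sigma>}" "{}" zs "length zs" 0 by (rule rot_grp[OF assms(1-3)])
  show ?thesis unfolding rot_def by (rule glist_valid[OF assms(4,5)])
qed

lemma card_le_sum: assumes "A \<subseteq> {..<length \<sigma>}" "\<forall>x\<in>set \<sigma>. 0 < x"
  shows "card A \<le> (\<Sum>j\<in>A. \<sigma>!j)"
proof -
  have fA: "finite A" using assms(1) finite_subset by blast
  have "card A = (\<Sum>j\<in>A. 1)" by simp
  also have "\<dots> \<le> (\<Sum>j\<in>A. \<sigma>!j)"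
  proof (rule sum_mono)
    fix j assume "j \<in> A"
    then have "j < length \<sigma>" using assms(1) by auto
    then show "1 \<le> \<sigma>!j" using assms(2) nth_mem by (metis Suc_leI One_nat_def)
  qed
  finally show ?thesis .
qed

locale blkset =
  fixes \<sigma> :: "nat list" and A B :: "nat set" and a b :: nat
  assumes pos: "\<forall>x\<in>set \<sigma>. 0 < x" and AB: "A \<inter> B = {}" "A \<union> B = {..<length \<sigma>}"
    and a: "a = (\<Sum>j\<in>A. \<sigma>!j)" and b: "b = (\<Sum>j\<in>B. \<sigma>!j)" and apos: "0 < a" and bpos: "0 < b"
begin

lemma blk_grp: assumes "distinct zs" "length zs = (a+b)*k" "0 < k"
  shows "grp \<sigma> A B zs (a*k) (b*k)"
proof
  show "distinct zs" by fact
  show "length zs = a*k + b*k" using assms(2) by (simp add: algebra_simps)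
  show "A \<inter> B = {}" "A \<union> B = {..<length \<sigma>}" using AB by auto
  have "card A \<le> a" unfolding a by (rule card_le_sum) (use AB pos in auto)
  moreover have "a \<le> a*k" using assms(3) by (cases k) auto
  ultimately show "card A \<le> a*k" by linarith
  have "card B \<le> b" unfolding b by (rule card_le_sum) (use AB pos in auto)
  moreover have "b \<le> b*k" using assms(3) by (cases k) auto
  ultimately show "card B \<le> b*k" by linarith
  show "0 < a*k" using apos assms(3) by simp
qed

lemma blk_tot: assumes "distinct zs" "length zs = (a+b)*k" "0 < k"
  shows "tot (blk \<sigma> A B a b zs k) i = (if i \<in> set zs then a*b else 0)"
proof -
  interpret grp \<sigma> A B zs "a*k" "b*k" by (rule blk_grp[OF assms])
  show ?thesis
  proof (cases "i \<in> set zs")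
    case True
    then obtain x where x: "x < length zs" "i = zs!x" by (metis in_set_conv_nth)
    show ?thesis
    proof (cases "x < a*k")
      case True
      have "tot (blk \<sigma> A B a b zs k) i = (k*a*b div (a*k)) * (\<Sum>j\<in>A. \<sigma>!j)"
        unfolding blk_def x(2) by (rule tot1[OF True]) simp
      also have "\<dots> = a*b" using apos assms(3) a by (simp add: ac_simps)
      finally show ?thesis using x by simp
    next
      case False
      then obtain u where u: "x = a*k + u" by (metis le_add_diff_inverse not_less)
      have ub: "u < b*k" using x(1) u assms(2) by (simp add: algebra_simps)
      have "tot (blk \<sigma> A B a b zs k) i = (k*a*b div (b*k)) * (\<Sum>j\<in>B. \<sigma>!j)"
        unfolding blk_def x(2) u by (rule tot2[OF ub]) simp
      also have "\<dots> = a*b" using bpos assms(3) b by (simp add: ac_simps)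
      finally show ?thesis using x by simp
    qed
  next
    case False then show ?thesis unfolding blk_def using tot3 by simp
  qed
qed

lemma blk_valid: assumes "distinct zs" "length zs = (a+b)*k" "0 < k" "set zs \<subseteq> {..<n}"
  shows "\<forall>c\<in>set (blk \<sigma> A B a b zs k). valid n \<sigma> c"
proof -
  interpret grp \<sigma> A B zs "a*k" "b*k" by (rule blk_grp[OF assms(1-3)])
  show ?thesis unfolding blk_def by (rule glist_valid[OF assms(4) pos])
qed

end

lemma set_concat_rep: "\<forall>c\<in>set xs. P c \<Longrightarrow> \<forall>c\<in>set (concat (replicate k xs)). P c"
  by (induction k) auto

lemma sum_if_less: "k \<le> n \<Longrightarrow> (\<Sum>i<n. if i < k then c else 0) = k * (c::nat)"
proof -
  assume "k \<le> n"
  have "(\<Sum>i<n. if i < k then c else 0) = (\<Sum>i\<in>{..<k}. c)"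
    by (rule sum.mono_neutral_cong_right) (use \<open>k \<le> n\<close> in auto)
  then show ?thesis by simp
qed

lemma sum_if_ivl: "k2 \<le> n \<Longrightarrow> (\<Sum>i<n. if k1 \<le> i \<and> i < k2 then c else 0) = (k2 - k1) * (c::nat)"
proof -
  assume "k2 \<le> n"
  have "(\<Sum>i<n. if k1 \<le> i \<and> i < k2 then c else 0) = (\<Sum>i\<in>{k1..<k2}. c)"
    by (rule sum.mono_neutral_cong_right) (use \<open>k2 \<le> n\<close> in auto)
  then show ?thesis by simp
qed

locale mainset =
  fixes \<sigma> :: "nat list" and A B :: "nat set" and n q r a b L :: nat
  assumes pos: "\<forall>x\<in>set \<sigma>. 0 < x" and rdef: "sum_list \<sigma> = r" and ne: "\<sigma> \<noteq> []"
    and AB: "A \<inter> B = {}" "A \<union> B = {..<length \<sigma>}"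
    and adef: "a = (\<Sum>j\<in>A. \<sigma>!j)" and bdef: "b = (\<Sum>j\<in>B. \<sigma>!j)" and Ldef: "L = lcm a b"
    and g: "gcd a b = 1" "gcd a r = 1" "gcd b r = 1"
begin

lemma rpos: "0 < r"
proof -
  obtain x xs where "\<sigma> = x # xs" using ne by (cases \<sigma>) auto
  then have "0 < x" using pos by simp
  then show ?thesis using rdef \<open>\<sigma> = x # xs\<close> by simp
qed

lemma ab: "a + b = r"
proof -
  have fA: "finite A" using AB(2) finite_lessThan finite_subset by (metis Un_upper1)
  have fB: "finite B" using AB(2) finite_lessThan finite_subset by (metis Un_upper2)
  have u: "sum ((!) \<sigma>) (A \<union> B) = sum ((!) \<sigma>) A + sum ((!) \<sigma>) B"
    by (rule sum.union_disjoint[OF fA fB AB(1)])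
  have "sum ((!) \<sigma>) (A \<union> B) = sum ((!) \<sigma>) {..<length \<sigma>}" by (simp only: AB(2))
  also have "\<dots> = sum_list \<sigma>" by (simp add: sum_list_sum_nth atLeast0LessThan)
  finally show ?thesis using rdef u adef bdef by simp
qed

lemma r2: assumes "2 \<le> r" shows "0 < a" "0 < b" "L = a*b"
proof -
  show "0 < a"
  proof (rule ccontr)
    assume "\<not> 0 < a" then have "a = 0" by simp
    then have "gcd a r = r" by simp
    then show False using assms g(2) by linarith
  qed
  show "0 < b"
  proof (rule ccontr)
    assume "\<not> 0 < b" then have "b = 0" by simp
    then have "gcd b r = r" by simp
    then show False using assms g(3) by linarith
  qed
  have "coprime a b" using g(1) by (simp only: coprime_iff_gcd_eq_1)
  then have "lcm a b = normalize (a*b)" by (rule lcm_coprime)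
  then show "L = a*b" using Ldef by simp
qed

lemma Yex: "\<exists>Y<r. [L*Y = q] (mod r)"
proof (cases "r = 1")
  case True then show ?thesis by (intro exI[of _ 0]) (simp add: cong_1)
next
  case False
  then have r2': "2 \<le> r" using rpos by simp
  have "coprime a r" "coprime b r" using g by (metis coprime_iff_gcd_eq_1)+
  then have "coprime L r" using r2[OF r2'] by (simp add: coprime_mult_left_iff)
  then have "gcd L r dvd q" by (metis coprime_iff_gcd_eq_1 one_dvd)
  then obtain x where x: "[L*x = q] (mod r)" using cong_solve_dvd_nat by blast
  have "[L*(x mod r) = L*x] (mod r)" by (simp add: cong_def mod_mult_right_eq)
  then have "[L*(x mod r) = q] (mod r)" using x cong_trans by blast
  then show ?thesis using rpos by (intro exI[of _ "x mod r"]) simp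
qed

lemma Yr: "Y < r \<Longrightarrow> Y = 0 \<or> 2 \<le> (r::nat)"
  by arith

definition EE where "EE = sh_edges n r q \<sigma>"

lemma mn_upper: "r * matching_number EE \<le> q * n \<and> (\<forall>M. is_matching EE M \<and> finite M \<longrightarrow> card M \<le> matching_number EE)"
proof -
  define S where "S = {card M | M. is_matching EE M \<and> finite M}"
  have bnd: "r * card M \<le> q * n" if "is_matching EE M" "finite M" for M
  proof -
    have c: "card (\<Union>M) = r * card M" and sub: "\<Union>M \<subseteq> sh_vertices n q"
      using matching_card that unfolding EE_def by blast+
    have cv: "card (sh_vertices n q) = q * n" unfolding sh_vertices_def by (simp add: card_cartesian_product)
    have fv: "finite (sh_vertices n q)" unfolding sh_vertices_def by simp
    have "card (\<Union>M) \<le> card (sh_vertices n q)" by (rule card_mono[OF fv sub])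
    then show ?thesis using c cv by simp
  qed
  have "S \<subseteq> {..q*n}"
  proof
    fix x assume "x \<in> S"
    then obtain M where M: "x = card M" "is_matching EE M" "finite M" unfolding S_def by blast
    have "card M \<le> r * card M" using rpos by simp
    then have "x \<le> q*n" using bnd[OF M(2,3)] M(1) by linarith
    then show "x \<in> {..q*n}" by simp
  qed
  then have fS: "finite S" using finite_subset by blast
  have "{} \<in> {M. is_matching EE M \<and> finite M}" unfolding is_matching_def by simp
  then have neS: "S \<noteq> {}" unfolding S_def by blast
  have mn: "matching_number EE = Max S" unfolding matching_number_def S_def by simp
  have "Max S \<in> S" using fS neS by simp
  then obtain M0 where "Max S = card M0" "is_matching EE M0" "finite M0" unfolding S_def by blast
  then have "r * Max S \<le> q * n" using bnd by metis
  moreover have "\<forall>M. is_matching EE M \<and> finite M \<longrightarrow> card M \<le> Max S"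
    using fS unfolding S_def by (auto intro: Max_ge)
  ultimately show ?thesis using mn by simp
qed

lemma lower:
  assumes "\<forall>c\<in>set cs. valid n \<sigma> c" "\<forall>i<n. tot cs i \<le> q"
  shows "(\<Sum>i<n. tot cs i) \<le> r * matching_number EE"
proof -
  obtain M where M: "is_matching EE M" "finite M" "card M = length cs"
    using realize[OF assms rdef rpos] unfolding EE_def by blast
  have "(\<Sum>i<n. tot cs i) = r * length cs" using tot_sum[OF assms(1)] rdef by simp
  also have "\<dots> \<le> r * matching_number EE"
  proof -
    have "length cs \<le> matching_number EE" using mn_upper M by metis
    then show ?thesis by simp
  qed
  finally show ?thesis .
qed

lemma perfect:
  assumes "\<forall>c\<in>set cs. valid n \<sigma> c" "\<forall>i<n. tot cs i = q"
  shows "\<exists>M. is_perfect_matching (sh_vertices n q) EE M" "r * matching_number EE = q * n"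
proof -
  have le: "\<forall>i<n. tot cs i \<le> q" using assms(2) by simp
  obtain M where M: "is_matching EE M" "finite M" "card M = length cs"
    using realize[OF assms(1) le rdef rpos] unfolding EE_def by blast
  have s: "(\<Sum>i<n. tot cs i) = q * n" using assms(2) by simp
  have "(\<Sum>i<n. tot cs i) = r * length cs" using tot_sum[OF assms(1)] rdef by simp
  then have cM: "r * card M = q * n" using s M by simp
  have c: "card (\<Union>M) = r * card M" and sub: "\<Union>M \<subseteq> sh_vertices n q"
    using matching_card M(1,2) unfolding EE_def by blast+
  have cv: "card (sh_vertices n q) = q * n" unfolding sh_vertices_def by (simp add: card_cartesian_product)
  have fv: "finite (sh_vertices n q)" unfolding sh_vertices_def by simp
  have "card (\<Union>M) = card (sh_vertices n q)" using c cv cM by simp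
  then have "\<Union>M = sh_vertices n q" using card_subset_eq[OF fv sub] by blast
  then show "\<exists>M. is_perfect_matching (sh_vertices n q) EE M"
    using M unfolding is_perfect_matching_def by blast
  have "q * n \<le> r * matching_number EE" using lower[OF assms(1) le] s by simp
  then show "r * matching_number EE = q * n" using mn_upper by simp
qed

lemma rotX:
  assumes "distinct zs" "length \<sigma> \<le> length zs" "set zs \<subseteq> {..<n}"
  shows "tot (concat (replicate X (rot \<sigma> zs))) i = (if i \<in> set zs then X*r else 0)"
    "\<forall>c\<in>set (concat (replicate X (rot \<sigma> zs))). valid n \<sigma> c"
proof -
  show "tot (concat (replicate X (rot \<sigma> zs))) i = (if i \<in> set zs then X*r else 0)"
    using rot_tot[OF assms(1,2) ne, of i] rdef by simp
  show "\<forall>c\<in>set (concat (replicate X (rot \<sigma> zs))). valid n \<sigma> c"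
    by (rule set_concat_rep[OF rot_valid[OF assms(1,2) ne assms(3) pos]])
qed

lemma blkY:
  assumes "Y = 0 \<or> 2 \<le> r" "distinct zs" "length zs = r*k" "set zs \<subseteq> {..<n}"
  shows "tot (concat (replicate Y (blk \<sigma> A B a b zs k))) i = (if i \<in> set zs then Y*L else 0)"
    "\<forall>c\<in>set (concat (replicate Y (blk \<sigma> A B a b zs k))). valid n \<sigma> c"
proof -
  have "tot (concat (replicate Y (blk \<sigma> A B a b zs k))) i = (if i \<in> set zs then Y*L else 0) \<and>
    (\<forall>c\<in>set (concat (replicate Y (blk \<sigma> A B a b zs k))). valid n \<sigma> c)"
  proof (cases "Y = 0")
    case True then show ?thesis by simp
  next
    case False
    then have r2': "2 \<le> r" using assms(1) by simp
    interpret blkset \<sigma> A B a b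
      using r2[OF r2'] pos AB adef bdef by unfold_locales auto
    show ?thesis
    proof (cases "k = 0")
      case True
      then have "blk \<sigma> A B a b zs k = []" unfolding blk_def glist_def by simp
      moreover have "set zs = {}" using assms(3) True by simp
      ultimately show ?thesis by simp
    next
      case False
      have lz: "length zs = (a+b)*k" using assms(3) ab by simp
      have k0: "0 < k" using False by simp
      have t: "tot (concat (replicate Y (blk \<sigma> A B a b zs k))) i = Y * tot (blk \<sigma> A B a b zs k) i" by simp
      have t2: "tot (concat (replicate Y (blk \<sigma> A B a b zs k))) i = (if i \<in> set zs then Y*L else 0)"
        unfolding t blk_tot[OF assms(2) lz k0] using r2[OF r2'] by simp
      have v: "\<forall>c\<in>set (concat (replicate Y (blk \<sigma> A B a b zs k))). valid n \<sigma> c"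
        by (rule set_concat_rep[OF blk_valid[OF assms(2) lz k0 assms(4)]])
      show ?thesis using t2 v by blast
    qed
  qed
  then show "tot (concat (replicate Y (blk \<sigma> A B a b zs k))) i = (if i \<in> set zs then Y*L else 0)"
    "\<forall>c\<in>set (concat (replicate Y (blk \<sigma> A B a b zs k))). valid n \<sigma> c" by blast+
qed

end

lemma frob:
  fixes L Y q r :: nat
  assumes "Y < r" "[L*Y = q] (mod r)" "(L-1)*(r-1) \<le> q"
  shows "L*Y \<le> q"
proof (rule ccontr)
  assume "\<not> L*Y \<le> q"
  then have lt: "q < L*Y" by simp
  then have "r dvd L*Y - q" using assms(2) cong_altdef_nat[of q "L*Y" r] by simp
  moreover have "0 < L*Y - q" using lt by simp
  ultimately have "r \<le> L*Y - q" by (simp add: dvd_imp_le)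
  then have h1: "q + r \<le> L*Y" using lt by simp
  obtain r' where r': "r = Suc r'" using assms(1) by (cases r) auto
  have L0: "L \<noteq> 0" using lt by (cases "L = 0") auto
  obtain L' where L': "L = Suc L'" using L0 by (cases L) auto
  have "Y \<le> r'" using assms(1) r' by simp
  then have "L*Y \<le> L*r'" by simp
  then have "q + r \<le> L*r'" using h1 by linarith
  moreover have "L'*r' \<le> q" using assms(3) L' r' by simp
  ultimately show False using L' r' by simp
qed

lemma s_le_r: "\<forall>x\<in>set \<sigma>. 0 < x \<Longrightarrow> length \<sigma> \<le> sum_list \<sigma>"
proof (induction \<sigma>)
  case Nil then show ?case by simp
next
  case (Cons x xs) then show ?case by simp
qed

context mainset
begin

lemma sr: "length \<sigma> \<le> r" using s_le_r[OF pos] rdef by simp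

lemma Xex: assumes "L*Y \<le> q" "[L*Y = q] (mod r)"
  shows "((q - L*Y) div r) * r + Y*L = q"
proof -
  have "[q = L*Y] (mod r)" using assms(2) by (simp add: cong_sym)
  then have "r dvd q - L*Y" using cong_altdef_nat[OF assms(1)] by simp
  then have "((q - L*Y) div r) * r = q - L*Y" by simp
  then show ?thesis using assms(1) by (simp add: mult.commute)
qed

lemma part1a: assumes "r dvd q" "length \<sigma> \<le> n"
  shows "(\<exists>M. is_perfect_matching (sh_vertices n q) EE M) \<and> r * matching_number EE = q * n"
proof -
  define cs where "cs = concat (replicate (q div r) (rot \<sigma> [0..<n]))"
  have t: "tot cs i = (if i \<in> set [0..<n] then (q div r)*r else 0)" for i
    unfolding cs_def by (rule rotX) (use assms in auto)
  have v: "\<forall>c\<in>set cs. valid n \<sigma> c" unfolding cs_def by (rule rotX) (use assms in auto)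
  have "\<forall>i<n. tot cs i = q" using t assms(1) by simp
  then show ?thesis using perfect[OF v] by blast
qed

lemma perf_rn: assumes "r dvd n" "Y < r" "L*Y \<le> q" "[L*Y = q] (mod r)"
  shows "(\<exists>M. is_perfect_matching (sh_vertices n q) EE M) \<and> r * matching_number EE = q * n"
proof (cases "n = 0")
  case True
  have "\<forall>c\<in>set []. valid n \<sigma> c" "\<forall>i<n. tot [] i = q" using True by auto
  then show ?thesis using perfect by blast
next
  case False
  define X where "X = (q - L*Y) div r"
  have hX: "X*r + Y*L = q" unfolding X_def by (rule Xex[OF assms(3,4)])
  have nr: "r \<le> n" using assms(1) False by (simp add: dvd_imp_le)
  have ln: "length \<sigma> \<le> n" using sr nr by simp
  have rm: "length [0..<n] = r * (n div r)" using assms(1) by simp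
  define cs where "cs = concat (replicate X (rot \<sigma> [0..<n])) @ concat (replicate Y (blk \<sigma> A B a b [0..<n] (n div r)))"
  have t1: "tot (concat (replicate X (rot \<sigma> [0..<n]))) i = (if i \<in> set [0..<n] then X*r else 0)" for i
    by (rule rotX) (use ln in auto)
  have t2: "tot (concat (replicate Y (blk \<sigma> A B a b [0..<n] (n div r)))) i = (if i \<in> set [0..<n] then Y*L else 0)" for i
    by (rule blkY[OF Yr[OF assms(2)] _ rm]) auto
  have v1: "\<forall>c\<in>set (concat (replicate X (rot \<sigma> [0..<n]))). valid n \<sigma> c"
    by (rule rotX) (use ln in auto)
  have v2: "\<forall>c\<in>set (concat (replicate Y (blk \<sigma> A B a b [0..<n] (n div r)))). valid n \<sigma> c"
    by (rule blkY[OF Yr[OF assms(2)] _ rm]) auto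
  have v: "\<forall>c\<in>set cs. valid n \<sigma> c" unfolding cs_def using v1 v2 by auto
  have "\<forall>i<n. tot cs i = q" unfolding cs_def using t1 t2 hX by simp
  then show ?thesis using perfect[OF v] by blast
qed

lemma part2: assumes "length \<sigma> \<le> n" "Y < r" "L*Y \<le> q" "[L*Y = q] (mod r)"
  shows "q * n \<le> r * matching_number EE + L * (r-1)^2"
proof -
  define X where "X = (q - L*Y) div r"
  have hX: "X*r + Y*L = q" unfolding X_def by (rule Xex[OF assms(3,4)])
  define m where "m = n div r"
  have rmn: "r*m \<le> n" unfolding m_def by simp
  have tl: "n - r*m \<le> r - 1" unfolding m_def using rpos
    by (metis Suc_pred' less_Suc_eq_le minus_div_mult_eq_mod mod_less_divisor mult.commute)
  have rm: "length [0..<r*m] = r * m" by simp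
  define cs where "cs = concat (replicate X (rot \<sigma> [0..<n])) @ concat (replicate Y (blk \<sigma> A B a b [0..<r*m] m))"
  have t1: "tot (concat (replicate X (rot \<sigma> [0..<n]))) i = (if i \<in> set [0..<n] then X*r else 0)" for i
    by (rule rotX) (use assms in auto)
  have t2: "tot (concat (replicate Y (blk \<sigma> A B a b [0..<r*m] m))) i = (if i \<in> set [0..<r*m] then Y*L else 0)" for i
    by (rule blkY[OF Yr[OF assms(2)] _ rm]) (use rmn in auto)
  have v1: "\<forall>c\<in>set (concat (replicate X (rot \<sigma> [0..<n]))). valid n \<sigma> c"
    by (rule rotX) (use assms in auto)
  have v2: "\<forall>c\<in>set (concat (replicate Y (blk \<sigma> A B a b [0..<r*m] m))). valid n \<sigma> c"
    by (rule blkY[OF Yr[OF assms(2)] _ rm]) (use rmn in auto)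
  have v: "\<forall>c\<in>set cs. valid n \<sigma> c" unfolding cs_def using v1 v2 by auto
  have tt: "tot cs i = X*r + (if i < r*m then Y*L else 0)" if "i < n" for i
    unfolding cs_def using t1 t2 that by simp
  have le: "\<forall>i<n. tot cs i \<le> q" using tt hX by simp
  have "(\<Sum>i<n. tot cs i) = (\<Sum>i<n. X*r + (if i < r*m then Y*L else 0))" using tt by simp
  also have "\<dots> = n*(X*r) + (r*m)*(Y*L)" by (simp add: sum.distrib sum_if_less[OF rmn])
  finally have s: "(\<Sum>i<n. tot cs i) = n*(X*r) + (r*m)*(Y*L)" .
  have "q * n = n*(X*r) + n*(Y*L)" using hX by (metis add_mult_distrib2 mult.commute)
  also have "n*(Y*L) = (r*m)*(Y*L) + (n - r*m)*(Y*L)" using rmn by (simp add: diff_mult_distrib)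
  also have "(n - r*m)*(Y*L) \<le> L*(r-1)^2"
  proof -
    have "Y \<le> r - 1" using assms(2) by simp
    then have "(n - r*m)*(Y*L) \<le> (r-1)*((r-1)*L)" using tl by (intro mult_le_mono) auto
    then show ?thesis by (simp add: power2_eq_square ac_simps)
  qed
  finally have "q*n \<le> (\<Sum>i<n. tot cs i) + L*(r-1)^2" using s by simp
  then show ?thesis using lower[OF v le] by simp
qed

end

context mainset
begin

lemma part3: assumes "length \<sigma> + r \<le> n" "\<not> r dvd n" "Y < r" "2*(L*Y) \<le> q" "[L*Y = q] (mod r)"
  shows "q * n \<le> r * matching_number EE + (r-1)^2"
proof -
  have LYq: "L*Y \<le> q" using assms(4) by simp
  define X where "X = (q - L*Y) div r"
  have hX: "X*r + Y*L = q" unfolding X_def by (rule Xex[OF LYq assms(5)])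
  define XO where "XO = (q - 2*(Y*L)) div r"
  have XO1: "XO*r \<le> q - 2*(Y*L)" unfolding XO_def by (metis div_mult_mod_eq le_add1)
  have XO2: "q - 2*(Y*L) < XO*r + r" unfolding XO_def using rpos
    by (metis div_mult_mod_eq add_less_cancel_left mod_less_divisor)
  have YL2: "2*(Y*L) \<le> q" using assms(4) by (simp add: mult.commute)
  have XOX: "XO \<le> X"
  proof -
    have "XO*r \<le> X*r" using XO1 hX YL2 by linarith
    then show ?thesis using rpos by simp
  qed
  define m where "m = n div r"
  define t where "t = n mod r"
  have nmt: "n = r*m + t" unfolding m_def t_def by simp
  have tr: "t < r" unfolding t_def using rpos by simp
  have t1: "1 \<le> t" unfolding t_def using assms(2) by (simp add: dvd_eq_mod_eq_0)
  have nr: "r \<le> n" using assms(1) by simp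
  have rmn: "r*m \<le> n" using nmt by simp
  have nrm: "n - r \<le> r*m" using nmt tr by simp
  define zs2 where "zs2 = [0..<n-r] @ [r*m..<n]"
  have dz: "distinct zs2" unfolding zs2_def using nrm by auto
  have lz: "length \<sigma> \<le> length zs2" unfolding zs2_def using assms(1) nmt by simp
  have sz: "set zs2 \<subseteq> {..<n}" unfolding zs2_def by auto
  have zs2i: "i \<in> set zs2 \<longleftrightarrow> i < n - r \<or> (r*m \<le> i \<and> i < n)" for i
    unfolding zs2_def by auto
  have rm: "length [0..<r*m] = r * m" by simp
  have rw: "length [n-r..<n] = r * 1" using nr by simp
  have Yr': "Y = 0 \<or> 2 \<le> r" by (rule Yr[OF assms(3)])
  define cs1 where "cs1 = concat (replicate XO (rot \<sigma> [0..<n]))"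
  define cs2 where "cs2 = concat (replicate (X - XO) (rot \<sigma> zs2))"
  define cs3 where "cs3 = concat (replicate Y (blk \<sigma> A B a b [0..<r*m] m))"
  define cs4 where "cs4 = concat (replicate Y (blk \<sigma> A B a b [n-r..<n] 1))"
  define cs where "cs = cs1 @ cs2 @ cs3 @ cs4"
  have T1: "tot cs1 i = (if i \<in> set [0..<n] then XO*r else 0)" for i
    unfolding cs1_def by (rule rotX) (use assms nr in auto)
  have T2: "tot cs2 i = (if i \<in> set zs2 then (X-XO)*r else 0)" for i
    unfolding cs2_def by (rule rotX[OF dz lz sz])
  have T3: "tot cs3 i = (if i \<in> set [0..<r*m] then Y*L else 0)" for i
    unfolding cs3_def by (rule blkY[OF Yr' _ rm]) (use rmn in auto)
  have T4: "tot cs4 i = (if i \<in> set [n-r..<n] then Y*L else 0)" for i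
    unfolding cs4_def by (rule blkY[OF Yr' _ rw]) auto
  have V1: "\<forall>c\<in>set cs1. valid n \<sigma> c"
    unfolding cs1_def by (rule rotX) (use assms nr in auto)
  have V2: "\<forall>c\<in>set cs2. valid n \<sigma> c"
    unfolding cs2_def by (rule rotX[OF dz lz sz])
  have V3: "\<forall>c\<in>set cs3. valid n \<sigma> c"
    unfolding cs3_def by (rule blkY[OF Yr' _ rm]) (use rmn in auto)
  have V4: "\<forall>c\<in>set cs4. valid n \<sigma> c"
    unfolding cs4_def by (rule blkY[OF Yr' _ rw]) auto
  have v: "\<forall>c\<in>set cs. valid n \<sigma> c" unfolding cs_def using V1 V2 V3 V4 by auto
  have sub: "(X - XO)*r = X*r - XO*r" by (simp add: diff_mult_distrib)
  have XOXr: "XO*r \<le> X*r" using XOX by simp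
  define d where "d i = (if n - r \<le> i \<and> i < r*m then r - 1 else 0)" for i
  have both: "tot cs i \<le> q \<and> q \<le> tot cs i + d i" if "i < n" for i
  proof -
    have tc: "tot cs i = XO*r + (if i \<in> set zs2 then (X-XO)*r else 0) + (if i < r*m then Y*L else 0)
        + (if n - r \<le> i then Y*L else 0)"
      unfolding cs_def using T1 T2 T3 T4 that by simp
    consider (a) "i < n - r" | (b) "n - r \<le> i" "i < r*m" | (c) "r*m \<le> i" by linarith
    then show ?thesis
    proof cases
      case a
      then have "tot cs i = XO*r + (X*r - XO*r) + Y*L" using tc zs2i sub nrm that by auto
      then show ?thesis using hX XOXr by simp
    next
      case b
      then have "tot cs i = XO*r + 2*(Y*L)" using tc zs2i by auto
      moreover have "d i = r - 1" using b unfolding d_def by simp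
      ultimately show ?thesis using XO1 XO2 YL2 by linarith
    next
      case c
      have "n - r \<le> i" using c nrm by linarith
      then have "tot cs i = XO*r + (X*r - XO*r) + Y*L" using tc zs2i sub c that by auto
      then show ?thesis using hX XOXr by simp
    qed
  qed
  have le: "\<forall>i<n. tot cs i \<le> q" using both by blast
  have "(\<Sum>i<n. q) \<le> (\<Sum>i<n. tot cs i + d i)" by (rule sum_mono) (use both in auto)
  then have "q*n \<le> (\<Sum>i<n. tot cs i) + (\<Sum>i<n. d i)" by (simp add: sum.distrib mult.commute)
  moreover have "(\<Sum>i<n. d i) = (r*m - (n-r)) * (r-1)" unfolding d_def by (rule sum_if_ivl[OF rmn])
  moreover have "r*m - (n-r) \<le> r - 1" using nmt t1 tr by simp
  then have "(r*m - (n-r)) * (r-1) \<le> (r-1)^2" by (simp add: power2_eq_square)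
  ultimately have "q*n \<le> (\<Sum>i<n. tot cs i) + (r-1)^2" by linarith
  then show ?thesis using lower[OF v le] by simp
qed

end

theorem theorem3p10:
  fixes n r q :: nat and \<sigma> :: "nat list" and A B :: "nat set"
  defines "s \<equiv> length \<sigma>"
      and "E \<equiv> sh_edges n r q \<sigma>"
      and "a \<equiv> (\<Sum>j\<in>A. \<sigma> ! j)"
      and "b \<equiv> (\<Sum>j\<in>B. \<sigma> ! j)"
  fixes L :: nat
  assumes L_def: "L = lcm a b"
      and part: "is_partition \<sigma> r"
      and good: "r_good \<sigma> r"
      and AB: "A \<inter> B = {}" "A \<union> B = {..<s}"
      and gcds: "gcd a b = 1" "gcd a r = 1" "gcd b r = 1"
  shows "(((r dvd q \<and> n \<ge> s) \<or> (r dvd n \<and> q \<ge> (L - 1) * (r - 1))) \<longrightarrow>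
           (\<exists>M. is_perfect_matching (sh_vertices n q) E M) \<and>
           real (matching_number E) = real (q * n) / real r)
       \<and> ((q \<ge> L * (r - 1) \<and> n \<ge> s) \<longrightarrow>
           real (matching_number E) \<ge> (real (q * n) - real (L * (r - 1)^2)) / real r)
       \<and> ((q \<ge> L * (r^2 - 1) \<and> s \<ge> 3 \<and> n \<ge> s + r) \<longrightarrow>
           real (matching_number E) \<ge> (real (q * n) - real ((r - 1)^2)) / real r)"
proof -
  have pos: "\<forall>x\<in>set \<sigma>. 0 < x" and rdef: "sum_list \<sigma> = r"
    using part unfolding is_partition_def by auto
  have ne: "\<sigma> \<noteq> []" using good unfolding r_good_def by auto
  interpret mainset \<sigma> A B n q r a b L
  proof
    show "\<forall>x\<in>set \<sigma>. 0 < x" "sum_list \<sigma> = r" "\<sigma> \<noteq> []" by fact+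
    show "A \<inter> B = {}" "A \<union> B = {..<length \<sigma>}" using AB unfolding s_def by auto
    show "a = (\<Sum>j\<in>A. \<sigma>!j)" "b = (\<Sum>j\<in>B. \<sigma>!j)" unfolding a_def b_def by (rule refl)+
    show "L = lcm a b" by fact
    show "gcd a b = 1" "gcd a r = 1" "gcd b r = 1" by fact+
  qed
  have EE: "EE = E" unfolding EE_def E_def by (rule refl)
  have rp: "0 < real r" using rpos by simp
  obtain Y where Y: "Y < r" "[L*Y = q] (mod r)" using Yex by blast
  have Yle: "L*Y \<le> L*(r-1)" using Y(1) by (intro mult_le_mono2) simp
  have P1: "(\<exists>M. is_perfect_matching (sh_vertices n q) E M) \<and>
           real (matching_number E) = real (q * n) / real r"
    if h: "(r dvd q \<and> n \<ge> s) \<or> (r dvd n \<and> q \<ge> (L - 1) * (r - 1))"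
  proof -
    have P: "(\<exists>M. is_perfect_matching (sh_vertices n q) EE M) \<and> r * matching_number EE = q * n"
      using h
    proof
      assume "r dvd q \<and> n \<ge> s"
      then show ?thesis using part1a unfolding s_def by blast
    next
      assume h2: "r dvd n \<and> q \<ge> (L - 1) * (r - 1)"
      have "L*Y \<le> q" using frob[OF Y] h2 by blast
      then show ?thesis using perf_rn[OF _ Y(1) _ Y(2)] h2 by blast
    qed
    then have "real (q*n) = real r * real (matching_number E)" unfolding EE by (metis of_nat_mult)
    then show ?thesis using P rp unfolding EE by simp
  qed
  have P2: "real (matching_number E) \<ge> (real (q * n) - real (L * (r - 1)^2)) / real r"
    if h: "q \<ge> L * (r - 1) \<and> n \<ge> s"
  proof -
    have LYq: "L*Y \<le> q" using Yle h by linarith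
    have "q * n \<le> r * matching_number EE + L * (r-1)^2"
      by (rule part2[OF _ Y(1) LYq Y(2)]) (use h s_def in simp)
    then have "real (q*n) \<le> real r * real (matching_number E) + real (L * (r-1)^2)"
      unfolding EE by (metis of_nat_add of_nat_le_iff of_nat_mult)
    then show ?thesis using rp by (simp add: pos_divide_le_eq mult.commute)
  qed
  have P3: "real (matching_number E) \<ge> (real (q * n) - real ((r - 1)^2)) / real r"
    if h: "q \<ge> L * (r^2 - 1) \<and> s \<ge> 3 \<and> n \<ge> s + r"
  proof -
    obtain r' where r': "r = Suc r'" using rpos by (cases r) auto
    have sq: "r^2 - 1 = r'*r' + 2*r'" using r' by (simp add: power2_eq_square)
    have "Y \<le> r'" using Y(1) r' by simp
    then have "2*(L*Y) \<le> 2*(L*r')" by simp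
    also have "\<dots> \<le> L*(r'*r' + 2*r')" by (simp add: algebra_simps)
    also have "\<dots> = L*(r^2 - 1)" using sq by simp
    finally have LY2: "2*(L*Y) \<le> q" using h by linarith
    have nat: "q * n \<le> r * matching_number EE + (r-1)^2"
    proof (cases "r dvd n")
      case True
      have "L*Y \<le> q" using LY2 by simp
      then show ?thesis using perf_rn[OF True Y(1) _ Y(2)] by simp
    next
      case False
      show ?thesis by (rule part3[OF _ False Y(1) LY2 Y(2)]) (use h s_def in auto)
    qed
    then have "real (q*n) \<le> real r * real (matching_number E) + real ((r-1)^2)"
      unfolding EE by (metis of_nat_add of_nat_le_iff of_nat_mult)
    then show ?thesis using rp by (simp add: pos_divide_le_eq mult.commute)
  qed
  show ?thesis using P1 P2 P3 by blast
qed

end
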